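(* The dynamical system $(X,T)$ is proximal, i.e. every pair $x,y\in X$ satisfies $\liminf_{n\to\infty}d(T^n(x),T^n(y))=0$.
   Context: Paths and cycles: a graph is $G=(V,E)$ with $V$ finite and $E\subset V\times V$. A path is a finite sequence of vertices $(u_0,\dots,u_L)$ with $(u_j,u_{j+1})\in E$; its length is $|\cdot|=L$; a cycle is a path with $u_0=u_L$. For paths where one ends where the next starts, $+$ denotes concatenation and $a\,c$ means the cycle $c$ traversed $a$ times. Construction: $G_0=(V_0,E_0)$ with $V_0=\{v_{0,0}\}$, $E_0=\{e_{0,0}\}$, $e_{0,0}=(v_{0,0},v_{0,0})$. For $n\geq1$, $G_n=(V_n,E_n)$ consists of a vertex $v_{n,0}$, the loop $e_{n,0}=(v_{n,0},v_{n,0})$, and $n$ cycles $c_{n,1},\dots,c_{n,n}$, each starting and ending at $v_{n,0}$, whose vertices other than $v_{n,0}$ are pairwise distinct (within each cycle and across cycles); $V_n$ is the set of all these vertices and $E_n$ consists of $e_{n,0}$ and the edges of the cycles. The maps $\varphi_n\colon V_{n+1}\to V_n$ and the lengths of the cycles $c_{n+1,i}$ are defined together: $\varphi_n(v_{n+1,0})=v_{n,0}$, and for each $i$ a path $P_{n,i}$ in $G_n$ from $v_{n,0}$ to $v_{n,0}$ is given; $c_{n+1,i}$ has length $|P_{n,i}|$ and $\varphi_n$ maps its $j$-th vertex to the $j$-th vertex of $P_{n,i}$ (written $\varphi_n(c_{n+1,i})=P_{n,i}$). The paths are: $P_{0,1}=10\,e_{0,0}$; for $n\geq1$: $P_{n,i}=e_{n,0}+2c_{n,i}+2c_{n,i+1}+\dots+2c_{n,n}+e_{n,0}$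 for $2\leq i\leq n$; $P_{n,n+1}=(n+2)^2\big(\sum_{i=1}^n|c_{n,i}|\big)\,e_{n,0}$; and $P_{n,1}=(1\,e_{n,0}+2c_{n,1})+(2\,e_{n,0}+2c_{n,1})+\dots+(k_n\,e_{n,0}+2c_{n,1})+e_{n,0}+2c_{n,2}+\dots+2c_{n,n}+e_{n,0}$, where $k_n=2\big(1+\sum_{i=1}^n|c_{n,i}|\big)$. Let $X=\{x\in\prod_{n\geq0}V_n:\varphi_n(x_{n+1})=x_n\ \forall n\}$ with metric $d(x,y)=2^{-\min\{i:x_i\neq y_i\}}$ ($d(x,x)=0$); $X$ is a compact zero-dimensional metric space, and $T\colon X\to X$ defined by $T(x)=y$ iff $(x_n,y_n)\in E_n$ for all $n$ is a well-defined homeomorphism. Write $x_n$ for the $n$-th coordinate of $x$. *)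

theory Defs
  imports "HOL-Library.Extended_Real" "HOL-Library.Liminf_Limsup"
begin

text \<open>Vertices of G_n are encoded as pairs of naturals: (0,0) is the base vertex v_{n,0};
  (i,j) with 1 \<le> i \<le> n and 1 \<le> j < |c_{n,i}| is the j-th vertex of the cycle c_{n,i}.
  Paths are nonempty vertex lists; the length of a path p is length p - 1.\<close>

type_synonym vert = "nat \<times> nat"
type_synonym path = "vert list"

definition base :: vert where "base = (0,0)"

text \<open>concatenation of paths (the second starts where the first ends)\<close>
definition pcat :: "path \<Rightarrow> path \<Rightarrow> path" where
  "pcat p q = p @ tl q"

fun pseq :: "path list \<Rightarrow> path" where
  "pseq [] = [base]"
| "pseq (p # ps) = pcat p (pseq ps)"

definition prep :: "nat \<Rightarrow> path \<Rightarrow> path" where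
  "prep a c = pseq (replicate a c)"

definition loop :: path where "loop = [base, base]"

definition cyc :: "nat \<Rightarrow> nat \<Rightarrow> path" where
  "cyc L i = map (\<lambda>j. if j = 0 \<or> j = L then base else (i, j)) [0..<L+1]"

text \<open>The paths P_{n,i} in G_n, given the lengths L k = |c_{n,k}| of the cycles of G_n.\<close>
definition Ppath :: "(nat \<Rightarrow> nat) \<Rightarrow> nat \<Rightarrow> nat \<Rightarrow> path" where
  "Ppath L n i =
    (let S = (\<Sum>k=1..n. L k); kn = 2 * (1 + S) in
     if n = 0 then (if i = 1 then prep 10 loop else [base])
     else if i = n + 1 then prep ((n+2)^2 * S) loop
     else if 2 \<le> i \<and> i \<le> n then
       pseq ([loop] @ map (\<lambda>k. prep 2 (cyc (L k) k)) [i..<n+1] @ [loop])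
     else if i = 1 then
       pseq (concat (map (\<lambda>m. [prep m loop, prep 2 (cyc (L 1) 1)]) [1..<kn+1])
             @ [loop] @ map (\<lambda>k. prep 2 (cyc (L k) k)) [2..<n+1] @ [loop])
     else [base])"

text \<open>lens n i = |c_{n,i}| (for 1 \<le> i \<le> n)\<close>
primrec lens :: "nat \<Rightarrow> nat \<Rightarrow> nat" where
  "lens 0 i = 0"
| "lens (Suc n) i = length (Ppath (lens n) n i) - 1"

definition cycle :: "nat \<Rightarrow> nat \<Rightarrow> path" where
  "cycle n i = cyc (lens n i) i"

definition V :: "nat \<Rightarrow> vert set" where
  "V n = {base} \<union> {(i, j). 1 \<le> i \<and> i \<le> n \<and> 1 \<le> j \<and> j < lens n i}"

definition E :: "nat \<Rightarrow> (vert \<times> vert) set" where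
  "E n = {(base, base)} \<union> (\<Union>i\<in>{1..n}. set (zip (cycle n i) (tl (cycle n i))))"

definition phi :: "nat \<Rightarrow> vert \<Rightarrow> vert" where
  "phi n v = (if v = base then base else Ppath (lens n) n (fst v) ! snd v)"

definition X :: "(nat \<Rightarrow> vert) set" where
  "X = {x. (\<forall>n. x n \<in> V n) \<and> (\<forall>n. phi n (x (Suc n)) = x n)}"

definition d :: "(nat \<Rightarrow> vert) \<Rightarrow> (nat \<Rightarrow> vert) \<Rightarrow> real" where
  "d x y = (if x = y then 0 else (1/2) ^ (LEAST i. x i \<noteq> y i))"

definition T :: "(nat \<Rightarrow> vert) \<Rightarrow> (nat \<Rightarrow> vert)" where
  "T x = (THE y. y \<in> X \<and> (\<forall>n. (x n, y n) \<in> E n))"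

end

theory Submission
  imports Defs
begin

definition closedp :: "path \<Rightarrow> bool" where
  "closedp p \<longleftrightarrow> p \<noteq> [] \<and> hd p = base \<and> last p = base"

definition cp :: "nat \<Rightarrow> path \<Rightarrow> bool" where
  "cp n p \<longleftrightarrow> closedp p \<and> successively (\<lambda>a b. (a,b) \<in> E n) p \<and> set p \<subseteq> V n"

lemma base_V: "base \<in> V n" by (simp add: V_def)
lemma base_E: "(base, base) \<in> E n" by (simp add: E_def)

lemma closed_pcat: "closedp p \<Longrightarrow> closedp q \<Longrightarrow> closedp (pcat p q)"
  unfolding closedp_def pcat_def by (cases q) (auto simp: last_append)

lemma closed_pseq: "(\<forall>p\<in>set ps. closedp p) \<Longrightarrow> closedp (pseq ps)"
proof (induction ps)
  case Nil then show ?case by (simp add: closedp_def)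
next
  case (Cons a ps) then show ?case using closed_pcat by simp
qed

lemma cp_pcat: assumes "cp n p" "cp n q" shows "cp n (pcat p q)"
proof -
  obtain b qs where q: "q = b # qs" using assms(2) unfolding cp_def closedp_def by (cases q) auto
  have b: "b = base" using assms(2) q unfolding cp_def closedp_def by auto
  have "successively (\<lambda>a b. (a,b) \<in> E n) (p @ qs)"
    using assms q b unfolding cp_def closedp_def
    by (auto simp: successively_append_iff successively_Cons)
  moreover have "closedp (pcat p q)" using assms closed_pcat cp_def by blast
  ultimately show ?thesis using assms q unfolding cp_def pcat_def by auto
qed

lemma cp_base: "cp n [base]" by (simp add: cp_def closedp_def base_V)
lemma cp_loop: "cp n loop" by (simp add: cp_def closedp_def base_V base_E loop_def)

lemma cp_pseq: "(\<forall>p\<in>set ps. cp n p) \<Longrightarrow> cp n (pseq ps)"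
  by (induction ps) (auto simp: cp_base cp_pcat)

lemma cp_prep: "cp n c \<Longrightarrow> cp n (prep a c)"
  unfolding prep_def by (rule cp_pseq) auto

lemma prep_loop: "prep a loop = replicate (Suc a) base"
  unfolding prep_def by (induction a) (auto simp: loop_def pcat_def)

lemma cyc_nth: "s \<le> L \<Longrightarrow> cyc L i ! s = (if s = 0 \<or> s = L then base else (i,s))"
  unfolding cyc_def by (simp del: upt_Suc add: nth_append)

lemma cyc_len: "length (cyc L i) = Suc L" by (simp add: cyc_def)

lemma closed_cyc: "closedp (cyc L i)"
proof -
  have "cyc L i \<noteq> []" using cyc_len[of L i] by auto
  then show ?thesis unfolding closedp_def using cyc_len[of L i] cyc_nth[of 0 L i] cyc_nth[of L L i]
    by (simp add: hd_conv_nth last_conv_nth)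
qed

lemma cyc_edges: "Suc s \<le> L \<Longrightarrow> 1 \<le> i \<Longrightarrow> i \<le> n \<Longrightarrow> L = lens n i \<Longrightarrow>
   (cyc L i ! s, cyc L i ! Suc s) \<in> E n"
proof -
  assume a: "Suc s \<le> L" "1 \<le> i" "i \<le> n" "L = lens n i"
  have "(cyc L i ! s, cyc L i ! Suc s) \<in> set (zip (cycle n i) (tl (cycle n i)))"
    using a unfolding set_zip cycle_def by (auto simp: cyc_len nth_tl intro!: exI[of _ s])
  then show ?thesis using a unfolding E_def by auto
qed

lemma cp_cyc: assumes "1 \<le> i" "i \<le> n" shows "cp n (cyc (lens n i) i)"
using assms
  unfolding cp_def
  apply (intro conjI closed_cyc)
   apply (auto simp: successively_conv_nth cyc_len intro!: cyc_edges)[1]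
proof
  fix v assume "v \<in> set (cyc (lens n i) i)"
  then obtain s where s: "s \<le> lens n i" "v = cyc (lens n i) i ! s"
    by (auto simp: in_set_conv_nth cyc_len less_Suc_eq_le)
  show "v \<in> V n" using s cyc_nth[OF s(1), of i] \<open>1 \<le> i\<close> \<open>i \<le> n\<close>
    by (auto simp: V_def)
qed

lemma cp_Ppath: "cp n (Ppath (lens n) n i)"
  unfolding Ppath_def Let_def
  by (auto intro!: cp_pseq cp_prep cp_loop cp_cyc cp_base simp del: upt_Suc pseq.simps)

lemma closed_loop: "closedp loop" by (simp add: closedp_def loop_def)
lemma closed_prep: "closedp c \<Longrightarrow> closedp (prep a c)"
  unfolding prep_def by (rule closed_pseq) auto

lemma pseq_sub: "(\<forall>p\<in>set ps. closedp p) \<Longrightarrow> c \<in> set ps \<Longrightarrow> \<exists>A B. pseq ps = A @ c @ B"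
proof (induction ps)
  case Nil then show ?case by simp
next
  case (Cons a ps)
  show ?case
  proof (cases "c = a")
    case True then show ?thesis by (auto simp: pcat_def)
  next
    case False
    then obtain A B where AB: "pseq ps = A @ c @ B" using Cons by auto
    show ?thesis
    proof (cases A)
      case (Cons a1 A1)
      then show ?thesis using AB by (intro exI[of _ "a @ A1"] exI[of _ B]) (simp add: pcat_def)
    next
      case Nil
      have c: "c = base # tl c" using Cons.prems False unfolding closedp_def
        by (metis list.collapse set_ConsD)
      have a: "a = butlast a @ [base]" using Cons.prems unfolding closedp_def
        by (metis append_butlast_last_id list.set_intros(1))
      have t: "tl (c @ B) = tl c @ B" using c by (metis list.sel(3) append_Cons)
      have "pseq (a # ps) = a @ tl c @ B" using AB Nil t by (simp add: pcat_def)
      also have "\<dots> = butlast a @ c @ B" using a c by (metis append.assoc append_Cons append_Nil)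
      finally show ?thesis by blast
    qed
  qed
qed

lemma prep2_sub: "closedp c \<Longrightarrow> \<exists>A B. prep 2 c = A @ c @ B"
  unfolding prep_def by (rule pseq_sub) (auto simp: numeral_2_eq_2)

lemma sub_trans: "\<exists>A B. q = A @ c @ B \<Longrightarrow> \<exists>A B. c = A @ e @ B \<Longrightarrow> \<exists>A B. q = A @ e @ B"
  by (metis append.assoc)

lemma Ppath_contains:
  assumes "1 \<le> m" "1 \<le> j" "j \<le> m"
  shows "\<exists>A B. Ppath L m j = A @ cyc (L m) m @ B"
proof -
  let ?f = "\<lambda>k. prep 2 (cyc (L k) k)"
  have cl: "\<forall>p\<in>set ps. closedp p \<Longrightarrow> ?f m \<in> set ps \<Longrightarrow> \<exists>A B. pseq ps = A @ cyc (L m) m @ B" for ps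
    using pseq_sub[of ps "?f m"] prep2_sub[OF closed_cyc, of "L m" m] sub_trans by blast
  show ?thesis
  proof (cases "j = 1")
    case True
    let ?S = "\<Sum>k=1..m. L k"
    have mem: "?f m \<in> set (concat (map (\<lambda>i. [prep i loop, ?f 1]) [1..<2 * (1 + ?S) + 1])
             @ [loop] @ map ?f [2..<m+1] @ [loop])"
    proof (cases "m = 1")
      case True
      have "1 \<in> set [1..<2 * (1 + ?S) + 1]" by (simp only: set_upt) simp
      then show ?thesis using True by (auto simp del: upt_Suc)
    next
      case False then show ?thesis using assms by auto
    qed
    have clo: "\<forall>p\<in>set (concat (map (\<lambda>i. [prep i loop, ?f 1]) [1..<2 * (1 + ?S) + 1])
             @ [loop] @ map ?f [2..<m+1] @ [loop]). closedp p"
      by (auto simp: closed_prep closed_loop closed_cyc simp del: upt_Suc)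
    have "Ppath L m j = pseq (concat (map (\<lambda>i. [prep i loop, ?f 1]) [1..<2 * (1 + ?S) + 1])
             @ [loop] @ map ?f [2..<m+1] @ [loop])"
      unfolding Ppath_def Let_def using True assms by (simp del: upt_Suc)
    then show ?thesis using cl[OF clo mem] by simp
  next
    case False
    show ?thesis unfolding Ppath_def Let_def using False assms
      by (auto intro!: cl simp: closed_prep closed_loop closed_cyc simp del: upt_Suc pseq.simps)
  qed
qed

lemma Ppath_last: "Ppath L n (Suc n) = replicate (Suc (if n = 0 then 10 else (n+2)^2 * (\<Sum>k=1..n. L k))) base"
  unfolding Ppath_def Let_def by (auto simp: prep_loop eval_nat_numeral)

lemma pseq_one: "pseq ([base,base] # ps) ! Suc 0 = base"
  by (simp add: pcat_def)

lemma Ppath_one: assumes "2 \<le> length (Ppath L n k)" shows "Ppath L n k ! 1 = base"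
proof -
  let ?S = "\<Sum>k=1..n. L k"
  have p1: "prep (Suc 0) loop = [base,base]" by (simp add: prep_loop)
  have u: "[1..<2 * (1 + ?S) + 1] = 1 # [2..<2 * (1 + ?S) + 1]" by (subst upt_rec) (simp add: numeral_2_eq_2 del: upt_Suc)
  show ?thesis
  proof (cases "n = 0 \<or> k = n + 1")
    case True
    then have "Ppath L n k = replicate (length (Ppath L n k)) base \<or> length (Ppath L n k) = 1"
      unfolding Ppath_def Let_def by (auto simp: prep_loop)
    then show ?thesis using assms by (metis nth_replicate One_nat_def less_le_trans numeral_le_one_iff one_less_numeral_iff semiring_norm(69) le_numeral_extra(4) less_2_cases_iff linorder_not_le)
  next
    case False
    let ?g = "\<lambda>m. [prep m loop, prep 2 (cyc (L 1) 1)]"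
    have "k = 1 \<or> (2 \<le> k \<and> k \<le> n) \<or> Ppath L n k = [base]"
      using False unfolding Ppath_def Let_def by auto
    moreover have "k = 1 \<Longrightarrow> \<exists>ps. Ppath L n k = pseq ([base,base] # ps)"
      using False unfolding Ppath_def Let_def by (simp only: u) (auto simp: p1 simp del: upt_Suc pseq.simps)
    moreover have "2 \<le> k \<Longrightarrow> k \<le> n \<Longrightarrow> \<exists>ps. Ppath L n k = pseq ([base,base] # ps)"
      using False unfolding Ppath_def Let_def by (auto simp: loop_def simp del: upt_Suc pseq.simps)
    ultimately show ?thesis using assms pseq_one by auto
  qed
qed

definition nxt :: "nat \<Rightarrow> vert \<Rightarrow> vert" where
  "nxt n v = cyc (lens n (fst v)) (fst v) ! Suc (snd v)"

lemma V_nb: "v \<in> V n \<Longrightarrow> v \<noteq> base \<Longrightarrow> v = (fst v, snd v) \<and> 1 \<le> fst v \<and> fst v \<le> n \<and> 1 \<le> snd v \<and> snd v < lens n (fst v)"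
  by (auto simp: V_def)

lemma E_cases: "(v,w) \<in> E n \<Longrightarrow> (v = base \<and> w = base) \<or>
   (\<exists>i s. 1 \<le> i \<and> i \<le> n \<and> s < lens n i \<and> v = cyc (lens n i) i ! s \<and> w = cyc (lens n i) i ! Suc s)"
  unfolding E_def cycle_def by (fastforce simp: set_zip cyc_len nth_tl)

lemma E_nonbase: assumes "v \<in> V n" "v \<noteq> base" "(v,w) \<in> E n" shows "w = nxt n v"
proof -
  from E_cases[OF assms(3)] assms(2) obtain i s where
    hh: "1 \<le> i" "i \<le> n" "s < lens n i" "v = cyc (lens n i) i ! s" "w = cyc (lens n i) i ! Suc s" by auto
  have "v = (if s = 0 \<or> s = lens n i then base else (i,s))" using hh cyc_nth[of s "lens n i" i] by auto
  then have "v = (i,s)" using assms(2) by (auto split: if_splits)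
  then show ?thesis using hh by (simp add: nxt_def)
qed

lemma E_base: assumes "(base,w) \<in> E n" shows "w = base \<or> (\<exists>i. w = (i, Suc 0))"
proof -
  { fix i s assume hh: "1 \<le> i" "i \<le> n" "s < lens n i" "base = cyc (lens n i) i ! s" "w = cyc (lens n i) i ! Suc s"
    have c: "cyc (lens n i) i ! s = (if s = 0 \<or> s = lens n i then base else (i,s))"
      using hh(3) by (intro cyc_nth) simp
    have "s = 0"
    proof (rule ccontr)
      assume "s \<noteq> 0"
      then have "base = (i,s)" using c hh(3,4) by simp
      then show False using hh(1) by (simp add: base_def)
    qed
    moreover have "cyc (lens n i) i ! Suc 0 = (if Suc 0 = lens n i then base else (i,Suc 0))"
      using cyc_nth[of "Suc 0" "lens n i" i] hh(3) \<open>s = 0\<close> by simp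
    ultimately have ?thesis using hh(5) by auto }
  then show ?thesis using E_cases[OF assms] by blast
qed

lemma E_nxt: assumes "v \<in> V n" "v \<noteq> base" shows "(v, nxt n v) \<in> E n"
proof -
  obtain i j where v: "v = (i,j)" "1 \<le> i" "i \<le> n" "1 \<le> j" "j < lens n i" using V_nb[OF assms] by (cases v) auto
  have a: "v = cyc (lens n i) i ! j" using v cyc_nth[of j "lens n i" i] by auto
  have b: "nxt n v = cyc (lens n i) i ! Suc j" using v by (simp add: nxt_def)
  have e: "(cyc (lens n i) i ! j, cyc (lens n i) i ! Suc j) \<in> E n" using cyc_edges[of j "lens n i" i n] v by simp
  show ?thesis using e unfolding a[symmetric] b[symmetric] .
qed

lemma nxt_V: assumes "v \<in> V n" "v \<noteq> base" shows "nxt n v \<in> V n"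
proof -
  obtain i j where v: "v = (i,j)" "1 \<le> i" "i \<le> n" "1 \<le> j" "j < lens n i" using V_nb[OF assms] by (cases v) auto
  have "nxt n v \<in> set (cyc (lens n i) i)" using v by (simp add: nxt_def cyc_len)
  then show ?thesis using cp_cyc[OF v(2,3)] unfolding cp_def by auto
qed

lemma phi_base[simp]: "phi n base = base" by (simp add: phi_def)

lemma phi_cyc: assumes "1 \<le> j" "s \<le> lens (Suc m) j"
  shows "phi m (cyc (lens (Suc m) j) j ! s) = Ppath (lens m) m j ! s"
proof -
  let ?P = "Ppath (lens m) m j"
  have cp: "cp m ?P" by (rule cp_Ppath)
  then have ne: "?P \<noteq> []" "hd ?P = base" "last ?P = base" by (auto simp: cp_def closedp_def)
  have L: "lens (Suc m) j = length ?P - 1" by simp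
  show ?thesis
  proof (cases "s = 0 \<or> s = lens (Suc m) j")
    case True
    then show ?thesis using ne L cyc_nth[OF assms(2), of j] by (auto simp: hd_conv_nth last_conv_nth)
  next
    case False
    then show ?thesis using assms cyc_nth[OF assms(2), of j] by (auto simp: phi_def base_def)
  qed
qed

lemma phi_V: assumes "v \<in> V (Suc n)" shows "phi n v \<in> V n"
proof (cases "v = base")
  case True then show ?thesis by (simp add: base_V)
next
  case False
  obtain i j where v: "v = (i,j)" "1 \<le> i" "j < lens (Suc n) i" using V_nb[OF assms False] by (cases v) auto
  let ?P = "Ppath (lens n) n i"
  have "phi n v = ?P ! j" using v False by (simp add: phi_def)
  moreover have "j < length ?P" using v by simp
  ultimately show ?thesis using cp_Ppath[of n i] unfolding cp_def by auto
qed

lemma phi_edge: assumes "v \<in> V (Suc n)" "v \<noteq> base" shows "(phi n v, phi n (nxt (Suc n) v)) \<in> E n"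
proof -
  obtain i j where v: "v = (i,j)" "1 \<le> i" "1 \<le> j" "j < lens (Suc n) i" using V_nb[OF assms] by (cases v) auto
  let ?P = "Ppath (lens n) n i"
  have "phi n v = ?P ! j" using v assms by (simp add: phi_def)
  moreover have "phi n (nxt (Suc n) v) = ?P ! Suc j" using v phi_cyc[of i "Suc j" n] by (simp add: nxt_def)
  moreover have "Suc j < length ?P" using v by simp
  ultimately show ?thesis using cp_Ppath[of n i] unfolding cp_def by (auto simp: successively_conv_nth)
qed

lemma phi_one: assumes "(k, Suc 0) \<in> V (Suc n)" shows "phi n (k, Suc 0) = base"
proof -
  have "Suc 0 < lens (Suc n) k" using assms by (auto simp: V_def base_def)
  then have "2 \<le> length (Ppath (lens n) n k)" by simp
  then show ?thesis using Ppath_one by (simp add: phi_def base_def)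
qed

definition Tc :: "(nat \<Rightarrow> vert) \<Rightarrow> nat \<Rightarrow> vert" where
  "Tc x n = (if x n \<noteq> base then nxt n (x n)
     else if x (Suc n) \<noteq> base then phi n (nxt (Suc n) (x (Suc n))) else base)"

lemma X_V: "x \<in> X \<Longrightarrow> x n \<in> V n" by (simp add: X_def)
lemma X_phi: "x \<in> X \<Longrightarrow> phi n (x (Suc n)) = x n" by (simp add: X_def)

lemma phi_to_base: assumes "v \<in> V (Suc n)" "(base, v) \<in> E (Suc n)" shows "phi n v = base"
  using E_base[OF assms(2)] assms(1) phi_one by auto

lemma Tc_V: assumes "x \<in> X" shows "Tc x n \<in> V n"
  using assms X_V[OF assms, of n] X_V[OF assms, of "Suc n"]
  by (auto simp: Tc_def nxt_V phi_V base_V)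

lemma Tc_phi: assumes x: "x \<in> X" shows "phi n (Tc x (Suc n)) = Tc x n"
proof (cases "x (Suc n) = base")
  case False
  then have t1: "Tc x (Suc n) = nxt (Suc n) (x (Suc n))" by (simp add: Tc_def)
  show ?thesis
  proof (cases "x n = base")
    case True then show ?thesis using t1 False by (simp add: Tc_def)
  next
    case nb: False
    have "(x n, phi n (nxt (Suc n) (x (Suc n)))) \<in> E n"
      using phi_edge[OF X_V[OF x] False] X_phi[OF x] by simp
    then have "phi n (nxt (Suc n) (x (Suc n))) = nxt n (x n)"
      using E_nonbase[OF X_V[OF x] nb] by simp
    then show ?thesis using t1 nb by (simp add: Tc_def)
  qed
next
  case True
  then have xn: "x n = base" using X_phi[OF x, of n] by simp
  then have t0: "Tc x n = base" using True by (simp add: Tc_def)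
  show ?thesis
  proof (cases "x (Suc (Suc n)) = base")
    case True then show ?thesis using t0 \<open>x (Suc n) = base\<close> by (simp add: Tc_def)
  next
    case False
    let ?w = "phi (Suc n) (nxt (Suc (Suc n)) (x (Suc (Suc n))))"
    have e: "(base, ?w) \<in> E (Suc n)"
      using phi_edge[OF X_V[OF x] False] X_phi[OF x, of "Suc n"] \<open>x (Suc n) = base\<close> by simp
    have v: "?w \<in> V (Suc n)" using phi_V nxt_V X_V[OF x] False by blast
    have "Tc x (Suc n) = ?w" using False \<open>x (Suc n) = base\<close> by (simp add: Tc_def)
    then show ?thesis using phi_to_base[OF v e] t0 by simp
  qed
qed

lemma Tc_E: assumes x: "x \<in> X" shows "(x n, Tc x n) \<in> E n"
proof (cases "x n = base")
  case False then show ?thesis using E_nxt[OF X_V[OF x] False] by (simp add: Tc_def)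
next
  case True
  show ?thesis
  proof (cases "x (Suc n) = base")
    case True then show ?thesis using \<open>x n = base\<close> by (simp add: Tc_def base_E)
  next
    case False
    then show ?thesis using phi_edge[OF X_V[OF x] False] X_phi[OF x, of n] \<open>x n = base\<close>
      by (simp add: Tc_def)
  qed
qed

lemma Tc_X: "x \<in> X \<Longrightarrow> Tc x \<in> X"
  using Tc_V Tc_phi unfolding X_def by blast

lemma Tc_unique: assumes x: "x \<in> X" and y: "y \<in> X" and e: "\<forall>n. (x n, y n) \<in> E n" shows "y = Tc x"
proof
  fix n
  show "y n = Tc x n"
  proof (cases "x n = base")
    case False then show ?thesis using E_nonbase[OF X_V[OF x] False] e by (simp add: Tc_def)
  next
    case True
    show ?thesis
    proof (cases "x (Suc n) = base")
      case xb: True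
      have "phi n (y (Suc n)) = base" using phi_to_base[OF X_V[OF y]] e xb by metis
      then show ?thesis using X_phi[OF y, of n] True xb by (simp add: Tc_def)
    next
      case False
      have "y (Suc n) = nxt (Suc n) (x (Suc n))" using E_nonbase[OF X_V[OF x] False] e by simp
      then show ?thesis using X_phi[OF y, of n] True False by (simp add: Tc_def)
    qed
  qed
qed

lemma T_eq: assumes "x \<in> X" shows "T x = Tc x"
  unfolding T_def
proof (rule the_equality)
  show "Tc x \<in> X \<and> (\<forall>n. (x n, Tc x n) \<in> E n)" using assms Tc_X Tc_E by blast
next
  fix y assume "y \<in> X \<and> (\<forall>n. (x n, y n) \<in> E n)"
  then show "y = Tc x" using Tc_unique assms by blast
qed

lemma W_X: "x \<in> X \<Longrightarrow> (T ^^ k) x \<in> X"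
  by (induction k) (auto simp: T_eq Tc_X)

lemma W_E: "x \<in> X \<Longrightarrow> ((T ^^ k) x n, (T ^^ Suc k) x n) \<in> E n"
  using W_X[of x k] by (simp add: T_eq Tc_E)

lemma W_phi: "x \<in> X \<Longrightarrow> phi n ((T ^^ k) x (Suc n)) = (T ^^ k) x n"
  using W_X[of x k] X_phi by blast

lemma W_V: "x \<in> X \<Longrightarrow> (T ^^ k) x n \<in> V n"
  using W_X[of x k] X_V by blast

definition SS :: "nat \<Rightarrow> nat" where "SS n = (\<Sum>k=1..n. lens n k)"

lemma lens_le_SS: "1 \<le> j \<Longrightarrow> j \<le> n \<Longrightarrow> lens n j \<le> SS n"
  unfolding SS_def by (rule member_le_sum) auto

lemma lens_last: "lens (Suc n) (Suc n) = (if n = 0 then 10 else (n+2)^2 * SS n)"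
  by (simp add: Ppath_last SS_def)

lemma SS_le_lens: "SS n \<le> lens (Suc n) (Suc n)"
proof (cases "n = 0")
  case True then show ?thesis by (simp add: SS_def)
next
  case False
  have "SS n \<le> (n+2)^2 * SS n" by simp
  then show ?thesis using False lens_last by simp
qed

lemma walk_cyc:
  assumes x: "x \<in> X" and k: "(T ^^ k) x m = cyc (lens m j) j ! s0"
    and j: "1 \<le> j" and s0: "1 \<le> s0"
  shows "s0 + t \<le> lens m j \<Longrightarrow> (T ^^ (k + t)) x m = cyc (lens m j) j ! (s0 + t)"
proof (induction t)
  case 0 then show ?case using k by simp
next
  case (Suc t)
  let ?L = "lens m j"
  have IH: "(T ^^ (k + t)) x m = (j, s0 + t)"
    using Suc cyc_nth[of "s0 + t" ?L j] s0 by simp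
  have nb: "(j, s0 + t) \<noteq> base" using j by (simp add: base_def)
  have "(T ^^ (k + Suc t)) x m = nxt m ((T ^^ (k + t)) x m)"
    using E_nonbase[OF W_V[OF x] _ W_E[OF x, of "k+t" m]] IH nb by simp
  then show ?case using IH by (simp add: nxt_def)
qed

lemma return_base: assumes x: "x \<in> X" shows "\<exists>t \<le> SS n. (T ^^ (k + t)) x n = base"
proof (cases "(T ^^ k) x n = base")
  case True then show ?thesis by (intro exI[of _ 0]) simp
next
  case False
  obtain j s where js: "(T ^^ k) x n = (j,s)" "1 \<le> j" "j \<le> n" "1 \<le> s" "s < lens n j"
    using V_nb[OF W_V[OF x] False] by (cases "(T ^^ k) x n") auto
  have c: "(T ^^ k) x n = cyc (lens n j) j ! s" using js cyc_nth[of s "lens n j" j] by simp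
  have "(T ^^ (k + (lens n j - s))) x n = cyc (lens n j) j ! (s + (lens n j - s))"
    by (rule walk_cyc[OF x c js(2) js(4)]) (use js in simp)
  also have "\<dots> = base" using js cyc_nth[of "lens n j" "lens n j" j] by simp
  finally show ?thesis using lens_le_SS[OF js(2,3)] by (intro exI[of _ "lens n j - s"]) simp
qed

lemma down_base: assumes x: "x \<in> X" shows "(T ^^ k) x (i + dd) = base \<Longrightarrow> (T ^^ k) x i = base"
proof (induction dd)
  case 0 then show ?case by simp
next
  case (Suc dd)
  then show ?case using W_phi[OF x, of "i + dd" k] by simp
qed

lemma exit_time: "P (k1::nat) \<Longrightarrow> \<not> P k' \<Longrightarrow> k1 \<le> k' \<Longrightarrow> \<exists>k2\<ge>k1. P k2 \<and> \<not> P (Suc k2)"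
proof (induction k')
  case 0 then show ?case by simp
next
  case (Suc k')
  show ?case
  proof (cases "k1 \<le> k'")
    case True then show ?thesis using Suc by (cases "P k'") auto
  next
    case False then have "k1 = Suc k'" using Suc by simp
    then show ?thesis using Suc by simp
  qed
qed

lemma long_base: assumes y: "y \<in> X" shows "\<exists>k\<ge>k0. \<forall>t \<le> SS n. (T ^^ (k + t)) y n = base"
proof -
  let ?m = "Suc (Suc n)"
  let ?W = "\<lambda>k. (T ^^ k) y"
  have dn2: "?W k ?m = base \<Longrightarrow> ?W k n = base" for k using down_base[OF y, of k n 2] by simp
  have dn1: "?W k (Suc n) = base \<Longrightarrow> ?W k n = base" for k using down_base[OF y, of k n 1] by simp
  obtain t1 where t1: "?W (k0 + t1) ?m = base" using return_base[OF y] by blast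
  define k1 where "k1 = k0 + t1"
  show ?thesis
  proof (cases "\<forall>k\<ge>k1. ?W k ?m = base")
    case True
    then show ?thesis using dn2 unfolding k1_def by (intro exI[of _ k1]) (auto simp: k1_def)
  next
    case False
    then obtain k' where "k' \<ge> k1" "?W k' ?m \<noteq> base" by auto
    then obtain k2 where k2: "k2 \<ge> k1" "?W k2 ?m = base" "?W (Suc k2) ?m \<noteq> base"
      using exit_time[of "\<lambda>k. ?W k ?m = base" k1 k'] t1 k1_def by blast
    obtain j where j: "?W (Suc k2) ?m = (j, Suc 0)"
      using E_base[of "?W (Suc k2) ?m" ?m] W_E[OF y, of k2 ?m] k2 by auto
    have jV: "1 \<le> j" "j \<le> ?m" "Suc 0 < lens ?m j"
      using W_V[OF y, of "Suc k2" ?m] j by (auto simp: V_def base_def)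
    let ?L = "lens ?m j"
    have c1: "?W (Suc k2) ?m = cyc ?L j ! 1" using j jV cyc_nth[of 1 ?L j] by simp
    have wm: "?W (k2 + s) ?m = cyc ?L j ! s" if "s \<le> ?L" for s
    proof (cases s)
      case 0 then show ?thesis using k2 cyc_nth[of 0 ?L j] by simp
    next
      case (Suc s')
      then show ?thesis using walk_cyc[OF y c1 jV(1), of s'] that by simp
    qed
    let ?P = "Ppath (lens (Suc n)) (Suc n) j"
    have w1: "?W (k2 + s) (Suc n) = ?P ! s" if "s \<le> ?L" for s
      using W_phi[OF y, of "Suc n" "k2 + s"] wm[OF that] phi_cyc[OF jV(1) that] by simp
    have lenP: "?L = length ?P - 1" by simp
    show ?thesis
    proof (cases "j = ?m")
      case True
      have P: "?P = replicate (Suc ((Suc n + 2)^2 * SS (Suc n))) base"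
        using True Ppath_last[of "lens (Suc n)" "Suc n"] by (simp add: SS_def)
      have "SS n \<le> SS (Suc n)" using SS_le_lens[of n] lens_le_SS[of "Suc n" "Suc n"] by simp
      also have "\<dots> \<le> (Suc n + 2)^2 * SS (Suc n)" by simp
      also have "\<dots> = ?L" using lenP P by simp
      finally have le: "SS n \<le> ?L" .
      have "\<forall>t \<le> SS n. ?W (k2 + t) n = base"
      proof (intro allI impI)
        fix t assume "t \<le> SS n"
        then have "t \<le> ?L" using le by simp
        moreover have "\<forall>v\<in>set ?P. v = base" using P by simp
        ultimately have "?W (k2 + t) (Suc n) = base" using w1 lenP
          by (metis Suc_pred' le_imp_less_Suc length_greater_0_conv nth_mem list.simps(3) P replicate_Suc)
        then show "?W (k2 + t) n = base" using dn1 by simp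
      qed
      then show ?thesis using k2 k1_def by (intro exI[of _ k2]) simp
    next
      case False
      then have "j \<le> Suc n" using jV by simp
      then obtain A B where AB: "?P = A @ cyc (lens (Suc n) (Suc n)) (Suc n) @ B"
        using Ppath_contains[of "Suc n" j "lens (Suc n)"] jV by auto
      let ?L' = "lens (Suc n) (Suc n)"
      have Pl: "length ?P = length A + Suc ?L' + length B" using AB by (simp add: cyc_len)
      have Q: "Ppath (lens n) n (Suc n) = replicate (length (Ppath (lens n) n (Suc n))) base"
        using Ppath_last[of "lens n" n] by simp
      have "\<forall>t \<le> SS n. ?W (k2 + length A + t) n = base"
      proof (intro allI impI)
        fix t assume "t \<le> SS n"
        then have tL: "t \<le> ?L'" using SS_le_lens[of n] by simp
        then have "length A + t \<le> ?L" using Pl lenP by simp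
        then have "?W (k2 + (length A + t)) (Suc n) = ?P ! (length A + t)" using w1 by blast
        also have "\<dots> = cyc ?L' (Suc n) ! t" using AB tL by (simp add: nth_append cyc_len)
        finally have "?W (k2 + length A + t) (Suc n) = cyc ?L' (Suc n) ! t" by (simp add: add.assoc)
        then have "?W (k2 + length A + t) n = Ppath (lens n) n (Suc n) ! t"
          using W_phi[OF y, of n "k2 + length A + t"] phi_cyc[of "Suc n" t n] tL by simp
        also have "\<dots> = base"
        proof -
          have "\<forall>v\<in>set (Ppath (lens n) n (Suc n)). v = base" using Ppath_last[of "lens n" n] by simp
          moreover have "t < length (Ppath (lens n) n (Suc n))"
            using tL Ppath_last[of "lens n" n] by simp
          ultimately show ?thesis by (meson nth_mem)
        qed
        finally show "?W (k2 + length A + t) n = base" .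
      qed
      then show ?thesis using k2 k1_def by (intro exI[of _ "k2 + length A"]) simp
    qed
  qed
qed

lemma both_base: assumes x: "x \<in> X" and y: "y \<in> X"
  shows "\<exists>k\<ge>k0. (T ^^ k) x n = base \<and> (T ^^ k) y n = base"
proof -
  obtain k where k: "k \<ge> k0" "\<forall>t \<le> SS n. (T ^^ (k + t)) y n = base" using long_base[OF y] by blast
  obtain t where t: "t \<le> SS n" "(T ^^ (k + t)) x n = base" using return_base[OF x] by blast
  show ?thesis using k t by (intro exI[of _ "k + t"]) auto
qed

lemma d_nonneg: "0 \<le> d a b" by (simp add: d_def)

lemma d_small: assumes "\<forall>i\<le>n. a i = b i" shows "d a b \<le> (1/2) ^ Suc n"
proof (cases "a = b")
  case True then show ?thesis by (simp add: d_def)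
next
  case False
  then obtain i where "a i \<noteq> b i" by auto
  then have l: "a (LEAST i. a i \<noteq> b i) \<noteq> b (LEAST i. a i \<noteq> b i)" by (rule LeastI)
  then have "Suc n \<le> (LEAST i. a i \<noteq> b i)" using assms by (meson not_less_eq_eq)
  then have "((1::real)/2) ^ (LEAST i. a i \<noteq> b i) \<le> (1/2) ^ Suc n"
    by (intro power_decreasing) auto
  then show ?thesis using False by (simp add: d_def)
qed

lemma agree: assumes x: "x \<in> X" and y: "y \<in> X"
  shows "\<exists>k\<ge>k0. d ((T ^^ k) x) ((T ^^ k) y) \<le> (1/2) ^ Suc n"
proof -
  obtain k where k: "k \<ge> k0" "(T ^^ k) x n = base" "(T ^^ k) y n = base" using both_base[OF x y] by blast
  have "\<forall>i\<le>n. (T ^^ k) x i = (T ^^ k) y i"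
  proof (intro allI impI)
    fix i assume "i \<le> n"
    then obtain dd where "n = i + dd" using le_Suc_ex by blast
    then show "(T ^^ k) x i = (T ^^ k) y i" using down_base[OF x, of k i dd] down_base[OF y, of k i dd] k by simp
  qed
  then show ?thesis using k d_small by blast
qed

theorem corollary3p4:
  shows "\<forall>x\<in>X. \<forall>y\<in>X. liminf (\<lambda>k. ereal (d ((T ^^ k) x) ((T ^^ k) y))) = 0"
proof (intro ballI)
  fix x y assume x: "x \<in> X" and y: "y \<in> X"
  let ?f = "\<lambda>k. ereal (d ((T ^^ k) x) ((T ^^ k) y))"
  have ge: "0 \<le> liminf ?f" by (rule Liminf_bounded) (simp add: d_nonneg)
  have le: "liminf ?f \<le> 0"
  proof (rule Liminf_least)
    fix P assume "eventually P sequentially"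
    then obtain N where N: "\<forall>k\<ge>N. P k" by (auto simp: eventually_sequentially)
    let ?z = "INF k\<in>Collect P. ?f k"
    have zle: "?z \<le> ereal ((1/2) ^ Suc n)" for n
    proof -
      obtain k where "k \<ge> N" "d ((T ^^ k) x) ((T ^^ k) y) \<le> (1/2) ^ Suc n" using agree[OF x y] by blast
      then show ?thesis using N by (intro INF_lower2[of k]) auto
    qed
    show "?z \<le> 0"
    proof (rule ccontr)
      assume "\<not> ?z \<le> 0"
      then have "0 < ?z" by simp
      then obtain r where r: "0 < ereal r" "ereal r < ?z" using ereal_dense2 by blast
      then have "0 < r" by simp
      obtain n where n: "((1::real)/2) ^ n < r" using real_arch_pow_inv[OF \<open>0 < r\<close>, of "1/2"] by auto
      have "((1::real)/2) ^ Suc n \<le> (1/2) ^ n" by (intro power_decreasing) auto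
      then have "?z \<le> ereal r" using zle[of n] n by (meson ereal_less_eq(3) less_imp_le order_trans)
      then show False using r by simp
    qed
  qed
  show "liminf ?f = 0" using ge le by simp
qed

end
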